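(* Let $T>0$ and let $\omega\in\mathbf{R}$, $\omega\neq 0$, be such that $e^{2i\omega T}\neq 1$. Then for any $a\in H^1$ and $g\in H^2$ there exists a unique solution $u\in\mathcal{W}^1_\infty$ of the boundary value problem $$\frac{d^2u}{dt^2}(t)=Au(t),\ t\in(0,T),\qquad u(0)=a,\qquad \int_0^T e^{i\omega t}u(t)\,dt=g .$$ Moreover, there exists $c>0$ depending only on $A$ (together with its boundary conditions, i.e. the eigen-system $\{\lambda_k,v_k\}$), $T$ and $\omega$ such that $$\|u\|_{\mathcal{W}^1_\infty}\le c\left(\|a\|_{H^1}+\|g\|_{H^2}\right)\qquad\forall a\in H^1,\ g\in H^2 .$$
   Context: Let $\mathrm{D}\subset\mathbf{R}^n$ be a domain and $H=L_2(\mathrm{D};\mathbf{C})$ (complex-valued square integrable functions) with inner product $(\cdot,\cdot)_H$. $A$ is a self-adjoint operator on $H$ (with boundary conditions encoded by a dense subset $H_{BC}\subset H$) mapping real-valued functions to real-valued functions, and there is an orthonormal basis $\{v_k\}_{k\ge1}$ of $H$ consisting of eigenfunctions, $Av_k=-\lambda_k v_k$, with $\lambda_k\in(0,+\infty)$ and $\lambda_k\to+\infty$. For $q=-1,0,1,2$, $H^q$ is the completion (closure of $H_{BC}\cap D(A)$) with respect to the norm $\|u\|_{H^q}=\big(\sum_{k\ge1}\lambda_k^q|(u,v_k)_H|^2\big)^{1/2}$; $H^0=H$. For $r\in[1,\infty]$, $\mathcal{C}^q=C([0,T];H^q)$, $\mathcal{L}^q_r=L_r([0,T];H^q)$ (Lebesgue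 measure), and $\mathcal{W}^1_r=\{u\in\mathcal{C}^0\cap\mathcal{L}^1_r:\ du/dt\in\mathcal{C}^0\}$ with norm $\|u\|_{\mathcal{W}^1_r}=\|u\|_{\mathcal{C}^0}+\|u\|_{\mathcal{L}^1_r}+\|du/dt\|_{\mathcal{C}^0}$. A function $u\in\mathcal{W}^1_1$ is said to satisfy $\frac{d^2u}{dt^2}=Au$ if $\frac{du}{dt}(t)-\frac{du}{dt}(s)=\int_s^tAu(r)\,dr$ holds in $H^{-1}$ for all $0\le s\le t\le T$; the conditions $u(0)=a$ and $\int_0^Te^{i\omega t}u(t)dt=g$ are required as equalities in $H$. *)

theory Defs
  imports "HOL-Analysis.Analysis" "HOL-Probability.Essential_Supremum"
begin

text \<open>Coefficient model: an element w of H is identified with its sequence of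
 Fourier coefficients k \<mapsto> (w, v_k)_H with respect to the orthonormal eigenbasis;
 lam k is the eigenvalue lambda_k (A v_k = - lambda_k v_k).\<close>

type_synonym coeffs = "nat \<Rightarrow> complex"

definition Hsq :: "(nat \<Rightarrow> real) \<Rightarrow> int \<Rightarrow> coeffs \<Rightarrow> ennreal" where
  "Hsq lam q w = (\<Sum>k. ennreal (lam k powi q * (cmod (w k))\<^sup>2))"

definition inH :: "(nat \<Rightarrow> real) \<Rightarrow> int \<Rightarrow> coeffs \<Rightarrow> bool" where
  "inH lam q w \<longleftrightarrow> Hsq lam q w < \<infinity>"

definition Hnorm :: "(nat \<Rightarrow> real) \<Rightarrow> int \<Rightarrow> coeffs \<Rightarrow> real" where
  "Hnorm lam q w = sqrt (enn2real (Hsq lam q w))"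

definition inC :: "(nat \<Rightarrow> real) \<Rightarrow> int \<Rightarrow> real \<Rightarrow> (real \<Rightarrow> coeffs) \<Rightarrow> bool" where
  "inC lam q T u \<longleftrightarrow> (\<forall>t\<in>{0..T}. inH lam q (u t)) \<and>
     (\<forall>t\<in>{0..T}. ((\<lambda>s. Hnorm lam q (u s - u t)) \<longlongrightarrow> 0) (at t within {0..T}))"

definition Cnorm :: "(nat \<Rightarrow> real) \<Rightarrow> int \<Rightarrow> real \<Rightarrow> (real \<Rightarrow> coeffs) \<Rightarrow> real" where
  "Cnorm lam q T u = (SUP t\<in>{0..T}. Hnorm lam q (u t))"

definition Linf_sq :: "(nat \<Rightarrow> real) \<Rightarrow> int \<Rightarrow> real \<Rightarrow> (real \<Rightarrow> coeffs) \<Rightarrow> ennreal" where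
  "Linf_sq lam q T u = esssup (restrict_space lborel {0..T}) (\<lambda>t. Hsq lam q (u t))"

definition inLinf :: "(nat \<Rightarrow> real) \<Rightarrow> int \<Rightarrow> real \<Rightarrow> (real \<Rightarrow> coeffs) \<Rightarrow> bool" where
  "inLinf lam q T u \<longleftrightarrow> Linf_sq lam q T u < \<infinity>"

definition Linf_norm :: "(nat \<Rightarrow> real) \<Rightarrow> int \<Rightarrow> real \<Rightarrow> (real \<Rightarrow> coeffs) \<Rightarrow> real" where
  "Linf_norm lam q T u = sqrt (enn2real (Linf_sq lam q T u))"

definition has_H_deriv :: "(nat \<Rightarrow> real) \<Rightarrow> real \<Rightarrow> (real \<Rightarrow> coeffs) \<Rightarrow> (real \<Rightarrow> coeffs) \<Rightarrow> bool" where
  "has_H_deriv lam T u u' \<longleftrightarrow> (\<forall>t\<in>{0..T}.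
     ((\<lambda>s. Hnorm lam 0 ((\<lambda>k. (u s k - u t k) / complex_of_real (s - t)) - u' t)) \<longlongrightarrow> 0)
       (at t within {0..T}))"

definition inW1inf :: "(nat \<Rightarrow> real) \<Rightarrow> real \<Rightarrow> (real \<Rightarrow> coeffs) \<Rightarrow> (real \<Rightarrow> coeffs) \<Rightarrow> bool" where
  "inW1inf lam T u u' \<longleftrightarrow> inC lam 0 T u \<and> inLinf lam 1 T u \<and> has_H_deriv lam T u u' \<and> inC lam 0 T u'"

definition W1inf_norm :: "(nat \<Rightarrow> real) \<Rightarrow> real \<Rightarrow> (real \<Rightarrow> coeffs) \<Rightarrow> (real \<Rightarrow> coeffs) \<Rightarrow> real" where
  "W1inf_norm lam T u u' = Cnorm lam 0 T u + Linf_norm lam 1 T u + Cnorm lam 0 T u'"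

text \<open>d^2u/dt^2 = Au in the sense: u'(t) - u'(s) = \<integral>_s^t A u(r) dr in H^{-1},
 written coefficientwise (A acts as multiplication of the k-th coefficient by -lam k).\<close>
definition wave_eq :: "(nat \<Rightarrow> real) \<Rightarrow> real \<Rightarrow> (real \<Rightarrow> coeffs) \<Rightarrow> (real \<Rightarrow> coeffs) \<Rightarrow> bool" where
  "wave_eq lam T u u' \<longleftrightarrow> (\<forall>s t k. 0 \<le> s \<longrightarrow> s \<le> t \<longrightarrow> t \<le> T \<longrightarrow>
      u' t k - u' s k = integral {s..t} (\<lambda>r. - complex_of_real (lam k) * u r k))"

definition is_solution :: "(nat \<Rightarrow> real) \<Rightarrow> real \<Rightarrow> real \<Rightarrow> coeffs \<Rightarrow> coeffs \<Rightarrow>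
    (real \<Rightarrow> coeffs) \<Rightarrow> (real \<Rightarrow> coeffs) \<Rightarrow> bool" where
  "is_solution lam T \<omega> a g u u' \<longleftrightarrow> inW1inf lam T u u' \<and> wave_eq lam T u u' \<and> u 0 = a \<and>
     (\<forall>k. integral {0..T} (\<lambda>t. exp (\<i> * complex_of_real (\<omega> * t)) * u t k) = g k)"

end

theory Submission
  imports Defs
begin
definition fsol :: "complex \<Rightarrow> complex \<Rightarrow> real \<Rightarrow> real \<Rightarrow> complex" where
  "fsol A B m t = A * of_real (cos (m*t)) + B * of_real (sin (m*t))"
definition dsol :: "complex \<Rightarrow> complex \<Rightarrow> real \<Rightarrow> real \<Rightarrow> complex" where
  "dsol A B m t = of_real m * (B * of_real (cos (m*t)) - A * of_real (sin (m*t)))"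

lemma d_fsol: "(fsol A B m has_vector_derivative dsol A B m t) (at t within S)"
  unfolding fsol_def dsol_def
  apply (rule derivative_eq_intros refl)+
  apply (simp add: algebra_simps)
  done

lemma d_dsol: "(dsol A B m has_vector_derivative (- of_real (m^2) * fsol A B m t)) (at t within S)"
  unfolding fsol_def dsol_def
  apply (rule derivative_eq_intros refl)+
  apply (simp add: algebra_simps power2_eq_square)
  done

lemma d_E: "((\<lambda>t. exp (\<i> * complex_of_real (\<omega> * t))) has_vector_derivative (\<i> * of_real \<omega> * exp (\<i> * complex_of_real (\<omega> * t)))) (at t within S)"
proof -
  have "((\<lambda>x. exp (\<i> * (of_real \<omega> * x))) has_field_derivative (\<i> * of_real \<omega> * exp (\<i> * (of_real \<omega> * of_real t)))) (at (of_real t))"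
    by (rule derivative_eq_intros refl)+ (simp add: algebra_simps)
  from has_vector_derivative_real_field[OF this] show ?thesis by simp
qed

lemma const_on:
  fixes p :: "real \<Rightarrow> complex"
  assumes "\<And>t. t \<in> {0..T} \<Longrightarrow> (p has_vector_derivative 0) (at t within {0..T})" "0 \<le> T"
  shows "\<forall>t\<in>{0..T}. p t = p 0"
proof -
  have "\<exists>c. \<forall>x\<in>{0..T}. p x = c"
    by (rule has_derivative_zero_constant) (use assms in \<open>auto simp: has_vector_derivative_def\<close>)
  then obtain c where "\<forall>x\<in>{0..T}. p x = c" by blast
  then show ?thesis using assms(2) by auto
qed

lemma d_cos: "((\<lambda>t. complex_of_real (cos (m*t))) has_vector_derivative (- of_real m * of_real (sin (m*t)))) (at t within S)"
  by (rule derivative_eq_intros refl)+ simp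
lemma d_sin: "((\<lambda>t. complex_of_real (sin (m*t))) has_vector_derivative (of_real m * of_real (cos (m*t)))) (at t within S)"
  by (rule derivative_eq_intros refl)+ simp

lemma ode_unique:
  fixes f f' :: "real \<Rightarrow> complex"
  assumes m: "m > 0" and T: "0 \<le> T"
    and d1: "\<And>t. t \<in> {0..T} \<Longrightarrow> (f has_vector_derivative f' t) (at t within {0..T})"
    and d2: "\<And>t. t \<in> {0..T} \<Longrightarrow> (f' has_vector_derivative (- of_real (m^2) * f t)) (at t within {0..T})"
  shows "\<forall>t\<in>{0..T}. f t = fsol (f 0) (f' 0 / of_real m) m t \<and> f' t = dsol (f 0) (f' 0 / of_real m) m t"
proof -
  define A where "A = f 0"
  define B where "B = f' 0 / of_real m"
  define h where "h t = f t - fsol A B m t" for t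
  define h' where "h' t = f' t - dsol A B m t" for t
  have dh: "(h has_vector_derivative h' t) (at t within {0..T})" if "t \<in> {0..T}" for t
    unfolding h_def[abs_def] h'_def
    using has_vector_derivative_diff[OF d1[OF that] d_fsol] .
  have dh': "(h' has_vector_derivative (- of_real (m^2) * h t)) (at t within {0..T})" if "t \<in> {0..T}" for t
    unfolding h_def h'_def[abs_def]
    using has_vector_derivative_diff[OF d2[OF that] d_dsol] by (simp add: algebra_simps)
  have h0: "h 0 = 0" by (simp add: h_def A_def fsol_def)
  have h'0: "h' 0 = 0" using m by (simp add: h'_def B_def dsol_def)
  define p where "p t = h t * of_real (cos (m*t)) - h' t * of_real (sin (m*t)) / of_real m" for t
  define q where "q t = h t * of_real (sin (m*t)) + h' t * of_real (cos (m*t)) / of_real m" for t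
  have "(p has_vector_derivative 0) (at t within {0..T})" if "t \<in> {0..T}" for t
  proof -
    have "(p has_vector_derivative (h t * (- of_real m * of_real (sin (m*t))) + h' t * of_real (cos (m*t)) - (h' t * (of_real m * of_real (cos (m*t))) + (- of_real (m^2) * h t) * of_real (sin (m*t))) / of_real m)) (at t within {0..T})"
      unfolding p_def[abs_def] by (intro has_vector_derivative_diff has_vector_derivative_mult has_vector_derivative_divide dh dh' d_cos d_sin that)
    then show ?thesis by (rule has_vector_derivative_eq_rhs) (use m in \<open>simp add: field_simps power2_eq_square\<close>)
  qed
  then have pc: "\<forall>t\<in>{0..T}. p t = p 0" using const_on T by blast
  have "(q has_vector_derivative 0) (at t within {0..T})" if "t \<in> {0..T}" for t
  proof -
    have "(q has_vector_derivative (h t * (of_real m * of_real (cos (m*t))) + h' t * of_real (sin (m*t)) + (h' t * (- of_real m * of_real (sin (m*t))) + (- of_real (m^2) * h t) * of_real (cos (m*t))) / of_real m)) (at t within {0..T})"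
      unfolding q_def[abs_def] by (intro has_vector_derivative_add has_vector_derivative_mult has_vector_derivative_divide dh dh' d_cos d_sin that)
    then show ?thesis by (rule has_vector_derivative_eq_rhs) (use m in \<open>simp add: field_simps power2_eq_square\<close>)
  qed
  then have qc: "\<forall>t\<in>{0..T}. q t = q 0" using const_on T by blast
  have "h t = 0 \<and> h' t = 0" if t: "t \<in> {0..T}" for t
  proof -
    have p0: "p t = 0" using bspec[OF pc t] h0 h'0 by (simp add: p_def)
    have q0: "q t = 0" using bspec[OF qc t] h0 h'0 by (simp add: q_def)
    have sc: "(of_real (sin (m*t)))^2 + (of_real (cos (m*t)))^2 = (1::complex)"
    proof -
      have "complex_of_real ((sin (m*t))^2 + (cos (m*t))^2) = 1" by simp
      then show ?thesis by (simp only: of_real_add of_real_power)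
    qed
    have e1: "p t * of_real (cos (m*t)) + q t * of_real (sin (m*t)) = h t * ((of_real (sin (m*t)))^2 + (of_real (cos (m*t)))^2)"
      unfolding p_def q_def using m by (simp add: field_simps power2_eq_square)
    have e2: "of_real m * (q t * of_real (cos (m*t)) - p t * of_real (sin (m*t))) = h' t * ((of_real (sin (m*t)))^2 + (of_real (cos (m*t)))^2)"
      unfolding p_def q_def using m by (simp add: field_simps power2_eq_square)
    show ?thesis using e1 e2 p0 q0 sc by simp
  qed
  then show ?thesis unfolding A_def[symmetric] B_def[symmetric] h_def h'_def by auto
qed

definition Sf :: "real \<Rightarrow> real \<Rightarrow> real \<Rightarrow> complex" where
  "Sf T \<omega> m = integral {0..T} (\<lambda>t. exp (\<i> * complex_of_real (\<omega> * t)) * of_real (sin (m*t)))"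
definition Cf :: "real \<Rightarrow> real \<Rightarrow> real \<Rightarrow> complex" where
  "Cf T \<omega> m = integral {0..T} (\<lambda>t. exp (\<i> * complex_of_real (\<omega> * t)) * of_real (cos (m*t)))"

lemma cont_E: "continuous_on S (\<lambda>t. exp (\<i> * complex_of_real (\<omega> * t)))"
  by (intro continuous_intros)

lemma cont_fsol: "continuous_on S (fsol A B m)"
  unfolding fsol_def by (intro continuous_intros)

lemma cont_dsol: "continuous_on S (dsol A B m)"
  unfolding dsol_def by (intro continuous_intros)

lemma int_fsol:
  "integral {0..T} (\<lambda>t. exp (\<i> * complex_of_real (\<omega> * t)) * fsol A B m t) = A * Cf T \<omega> m + B * Sf T \<omega> m"
proof -
  have i1: "(\<lambda>t. exp (\<i> * complex_of_real (\<omega> * t)) * of_real (cos (m*t))) integrable_on {0..T}"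
    by (intro integrable_continuous_interval continuous_intros)
  have i2: "(\<lambda>t. exp (\<i> * complex_of_real (\<omega> * t)) * of_real (sin (m*t))) integrable_on {0..T}"
    by (intro integrable_continuous_interval continuous_intros)
  have "(\<lambda>t. exp (\<i> * complex_of_real (\<omega> * t)) * fsol A B m t) = (\<lambda>t. A * (exp (\<i> * complex_of_real (\<omega> * t)) * of_real (cos (m*t))) + B * (exp (\<i> * complex_of_real (\<omega> * t)) * of_real (sin (m*t))))"
    by (auto simp: fsol_def algebra_simps)
  then show ?thesis
    unfolding Cf_def Sf_def by (simp only: integral_add[OF integrable_on_mult_right[OF i1] integrable_on_mult_right[OF i2]] integral_mult_right)
qed

lemma ident:
  assumes T: "0 \<le> T"
  shows "of_real (\<omega>^2 - m^2) * integral {0..T} (\<lambda>t. exp (\<i> * complex_of_real (\<omega> * t)) * fsol A B m t)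
     = exp (\<i> * complex_of_real (\<omega> * T)) * (dsol A B m T - \<i> * of_real \<omega> * fsol A B m T) - (dsol A B m 0 - \<i> * of_real \<omega> * fsol A B m 0)"
proof -
  let ?E = "\<lambda>t. exp (\<i> * complex_of_real (\<omega> * t))"
  define G where "G t = ?E t * (dsol A B m t - \<i> * of_real \<omega> * fsol A B m t)" for t
  have "(G has_vector_derivative (of_real (\<omega>^2 - m^2) * (?E t * fsol A B m t))) (at t within {0..T})" for t
  proof -
    have "(G has_vector_derivative (?E t * ((- of_real (m^2) * fsol A B m t) - \<i> * of_real \<omega> * dsol A B m t)
           + \<i> * of_real \<omega> * ?E t * (dsol A B m t - \<i> * of_real \<omega> * fsol A B m t))) (at t within {0..T})"
      unfolding G_def[abs_def]
      by (intro has_vector_derivative_mult has_vector_derivative_diff has_vector_derivative_mult_right d_E d_dsol d_fsol)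
    then show ?thesis by (rule has_vector_derivative_eq_rhs) (simp add: algebra_simps power2_eq_square)
  qed
  then have "((\<lambda>t. of_real (\<omega>^2 - m^2) * (?E t * fsol A B m t)) has_integral (G T - G 0)) {0..T}"
    using T by (intro fundamental_theorem_of_calculus) auto
  then have "integral {0..T} (\<lambda>t. of_real (\<omega>^2 - m^2) * (?E t * fsol A B m t)) = G T - G 0"
    by (rule integral_unique)
  moreover have "integral {0..T} (\<lambda>t. of_real (\<omega>^2 - m^2) * (?E t * fsol A B m t)) = of_real (\<omega>^2 - m^2) * integral {0..T} (\<lambda>t. ?E t * fsol A B m t)"
    by (rule integral_mult_right)
  ultimately show ?thesis by (simp add: G_def)
qed

lemma Sf_ident: assumes "0 \<le> T"
  shows "of_real (\<omega>^2 - m^2) * Sf T \<omega> m = exp (\<i> * complex_of_real (\<omega> * T)) * (of_real m * of_real (cos (m*T)) - \<i> * of_real \<omega> * of_real (sin (m*T))) - of_real m"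
  using ident[OF assms, of \<omega> m 0 1] int_fsol[of T \<omega> 0 1 m] by (simp add: fsol_def dsol_def)

lemma Cf_ident: assumes "0 \<le> T"
  shows "of_real (\<omega>^2 - m^2) * Cf T \<omega> m = exp (\<i> * complex_of_real (\<omega> * T)) * (- of_real m * of_real (sin (m*T)) - \<i> * of_real \<omega> * of_real (cos (m*T))) + \<i> * of_real \<omega>"
  using ident[OF assms, of \<omega> m 1 0] int_fsol[of T \<omega> 1 0 m] by (simp add: fsol_def dsol_def)

lemma sin_nz:
  assumes "exp (2 * \<i> * complex_of_real (\<omega> * T)) \<noteq> 1"
  shows "sin (\<omega> * T) \<noteq> 0"
proof
  assume s: "sin (\<omega> * T) = 0"
  have "exp (2 * \<i> * complex_of_real (\<omega> * T)) = (exp (\<i> * complex_of_real (\<omega> * T)))^2"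
    using exp_double[of "\<i> * complex_of_real (\<omega> * T)"] by (simp add: mult.assoc)
  also have "exp (\<i> * complex_of_real (\<omega> * T)) = of_real (cos (\<omega> * T))"
    using s by (simp add: complex_eq_iff Re_exp Im_exp)
  also have "(complex_of_real (cos (\<omega> * T)))^2 = 1"
  proof -
    have "(cos (\<omega> * T))^2 = 1" using s sin_cos_squared_add[of "\<omega>*T"] by simp
    then show ?thesis by (metis of_real_1 of_real_power)
  qed
  finally show False using assms by simp
qed

lemma Sf_nz_gen:
  assumes m: "m > 0" and T: "T > 0" and ne: "\<omega>^2 \<noteq> m^2" and s: "sin (\<omega> * T) \<noteq> 0"
  shows "Sf T \<omega> m \<noteq> 0"
proof
  assume S0: "Sf T \<omega> m = 0"
  let ?z = "exp (\<i> * complex_of_real (\<omega> * T))"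
  let ?c = "cos (m*T)" and ?s = "sin (m*T)"
  have eq: "?z * (of_real m * of_real ?c - \<i> * of_real \<omega> * of_real ?s) = of_real m"
    using Sf_ident[of T \<omega> m] T S0 by simp
  define w where "w = of_real m * of_real ?c - \<i> * of_real \<omega> * of_real ?s"
  have "cmod (?z * w) = m" using eq m unfolding w_def by simp
  then have "cmod w = m" by (simp add: norm_mult)
  then have "(cmod w)^2 = m^2" by simp
  then have "(m * ?c)^2 + (\<omega> * ?s)^2 = m^2" unfolding cmod_power2 w_def by simp
  moreover have "m^2 * ?c^2 = m^2 - m^2 * ?s^2" by (simp add: cos_squared_eq algebra_simps)
  ultimately have "\<omega>^2 * ?s^2 - m^2 * ?s^2 = 0"
    by (simp add: power_mult_distrib)
  then have "(\<omega>^2 - m^2) * ?s^2 = 0" by (simp only: left_diff_distrib)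
  with ne have ss: "?s = 0" by simp
  then have cc: "?c^2 = 1" using sin_cos_squared_add[of "m*T"] by simp
  from eq ss have "?z * of_real ?c * of_real m = of_real m" by (simp add: algebra_simps)
  with m have zc: "?z * of_real ?c = 1" by simp
  have "exp (2 * \<i> * complex_of_real (\<omega> * T)) = ?z^2"
    using exp_double[of "\<i> * complex_of_real (\<omega> * T)"] by (simp add: mult.assoc)
  also have "\<dots> = ?z^2 * of_real (?c^2)" using cc by simp
  also have "\<dots> = (?z * of_real ?c)^2" by (simp add: power_mult_distrib)
  also have "\<dots> = 1" using zc by simp
  finally have "exp (2 * \<i> * complex_of_real (\<omega> * T)) = 1" .
  then have "sin (\<omega> * T) = 0"
  proof -
    assume e: "exp (2 * \<i> * complex_of_real (\<omega> * T)) = 1"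
    have "Im (exp (2 * \<i> * complex_of_real (\<omega> * T))) = sin (2 * (\<omega> * T))" by (simp add: Im_exp)
    moreover have "Re (exp (2 * \<i> * complex_of_real (\<omega> * T))) = cos (2 * (\<omega> * T))" by (simp add: Re_exp)
    ultimately have "sin (2 * (\<omega> * T)) = 0" "cos (2 * (\<omega> * T)) = 1" using e by auto
    then show ?thesis using zero_le_power2[of "sin (\<omega>*T)"] by (auto simp: cos_double sin_double) (smt (verit) zero_le_power2)
  qed
  with s show False by simp
qed

lemma Sf_nz_deg:
  assumes m: "m > 0" and T: "T > 0" and eq: "\<omega>^2 = m^2"
  shows "Sf T \<omega> m \<noteq> 0"
proof -
  define \<sigma> where "\<sigma> = \<omega> / m"
  have om: "\<omega> = m \<or> \<omega> = - m" using eq m by (metis power2_eq_iff)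
  have cs: "cos (\<omega> * t) = cos (m * t) \<and> sin (\<omega> * t) = \<sigma> * sin (m * t)" for t
    using om m by (auto simp: \<sigma>_def)
  have sig: "\<sigma> \<noteq> 0" using om m by (auto simp: \<sigma>_def)
  define H where "H t = complex_of_real (- cos (2*m*t) / (4*m)) + \<i> * complex_of_real (\<sigma> * (t/2 - sin (2*m*t) / (4*m)))" for t
  have "(H has_vector_derivative exp (\<i> * complex_of_real (\<omega> * t)) * of_real (sin (m*t))) (at t within {0..T})" for t
  proof -
    have "(H has_vector_derivative complex_of_real (sin (2*m*t) * (2*m) / (4*m)) + \<i> * complex_of_real (\<sigma> * (1/2 - cos (2*m*t) * (2*m) / (4*m)))) (at t within {0..T})"
    proof -
      have r1: "((\<lambda>t. - cos (2*m*t) / (4*m)) has_real_derivative (sin (2*m*t) * (2*m) / (4*m))) (at t within {0..T})"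
        using m by (auto intro!: derivative_eq_intros simp: field_simps)
      have r2: "((\<lambda>t. \<sigma> * (t/2 - sin (2*m*t) / (4*m))) has_real_derivative (\<sigma> * (1/2 - cos (2*m*t) * (2*m) / (4*m)))) (at t within {0..T})"
        using m by (auto intro!: derivative_eq_intros simp: field_simps)
      show ?thesis unfolding H_def[abs_def]
        by (rule has_vector_derivative_add[OF has_vector_derivative_of_real[OF r1] has_vector_derivative_mult_right[OF has_vector_derivative_of_real[OF r2]]])
    qed
    moreover have "complex_of_real (sin (2*m*t) * (2*m) / (4*m)) + \<i> * complex_of_real (\<sigma> * (1/2 - cos (2*m*t) * (2*m) / (4*m)))
       = exp (\<i> * complex_of_real (\<omega> * t)) * of_real (sin (m*t))"
    proof -
      have a: "sin (2*m*t) = 2 * sin (m*t) * cos (m*t)" using sin_double[of "m*t"] by (simp add: mult.assoc)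
      have b: "cos (2*m*t) = 1 - 2 * (sin (m*t))^2" using cos_double_sin[of "m*t"] by (simp add: mult.assoc)
      show ?thesis using m cs[of t] unfolding a b
        by (simp add: complex_eq_iff Re_exp Im_exp a b field_simps power2_eq_square)
    qed
    ultimately show ?thesis by simp
  qed
  then have "((\<lambda>t. exp (\<i> * complex_of_real (\<omega> * t)) * of_real (sin (m*t))) has_integral (H T - H 0)) {0..T}"
    using T by (intro fundamental_theorem_of_calculus) auto
  then have S: "Sf T \<omega> m = H T - H 0" unfolding Sf_def by (rule integral_unique)
  show ?thesis
  proof
    assume "Sf T \<omega> m = 0"
    then have "Re (H T - H 0) = 0" "Im (H T - H 0) = 0" using S by auto
    then have c1: "cos (2*m*T) = 1" and i0: "\<sigma> * (T/2 - sin (2*m*T) / (4*m)) = 0" using m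
      by (auto simp: H_def field_simps)
    have "sin (2*m*T) = 0" using c1 sin_cos_squared_add[of "2*m*T"] by simp
    with i0 sig T show False by simp
  qed
qed

lemma Sf_nz:
  assumes m: "m > 0" and T: "T > 0" and s: "sin (\<omega> * T) \<noteq> 0"
  shows "Sf T \<omega> m \<noteq> 0"
  using Sf_nz_gen[OF m T _ s] Sf_nz_deg[OF m T] by blast

lemma zc_bound:
  fixes x c :: real
  shows "\<bar>sin x\<bar> \<le> cmod (exp (\<i> * complex_of_real x) * of_real c - 1)"
proof -
  have e: "(cmod (exp (\<i> * complex_of_real x) * of_real c - 1))^2 = (cos x * c - 1)^2 + (sin x * c)^2"
    by (simp add: cmod_power2 Re_exp Im_exp)
  have "(cos x * c - 1)^2 + (sin x * c)^2 - (sin x)^2 = (c - cos x)^2"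
    apply (simp only: power_mult_distrib sin_squared_eq)
    apply (simp add: power2_eq_square algebra_simps)
    done
  then have "(sin x)^2 \<le> (cmod (exp (\<i> * complex_of_real x) * of_real c - 1))^2"
    using e by (smt (verit) zero_le_power2)
  then show ?thesis by (metis abs_le_square_iff abs_norm_cancel)
qed

lemma big_bounds:
  assumes T: "T > 0" and om: "\<omega> \<noteq> 0" and q: "sin (\<omega> * T) \<noteq> 0"
    and mb: "m \<ge> 2 * \<bar>\<omega>\<bar> / \<bar>sin (\<omega> * T)\<bar>"
  shows "1 / (m * cmod (Sf T \<omega> m)) \<le> 2 / \<bar>sin (\<omega> * T)\<bar> \<and> cmod (Cf T \<omega> m / Sf T \<omega> m) \<le> 4 / \<bar>sin (\<omega> * T)\<bar>"
proof -
  let ?q = "\<bar>sin (\<omega> * T)\<bar>"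
  let ?z = "exp (\<i> * complex_of_real (\<omega> * T))"
  let ?c = "cos (m*T)" and ?s = "sin (m*T)"
  have q0: "?q > 0" using q by simp
  have q1: "?q \<le> 1" by simp
  have "2 * \<bar>\<omega>\<bar> / ?q \<ge> 2 * \<bar>\<omega>\<bar>" using q0 q1 om
    by (simp add: le_divide_eq)
  then have m2: "m \<ge> 2 * \<bar>\<omega>\<bar>" using mb by linarith
  have m0: "m > 0" using m2 om by simp
  have mq: "m * ?q \<ge> 2 * \<bar>\<omega>\<bar>" using mb q0 by (simp add: divide_le_eq mult.commute)
  define w where "w = ?z * (of_real m * of_real ?c - \<i> * of_real \<omega> * of_real ?s) - of_real m"
  have wS: "of_real (\<omega>^2 - m^2) * Sf T \<omega> m = w" using Sf_ident[of T \<omega> m] T by (simp add: w_def)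
  have w_alt: "w = of_real m * (?z * of_real ?c - 1) - \<i> * of_real \<omega> * ?z * of_real ?s"
    unfolding w_def by (simp add: algebra_simps)
  have n1: "cmod (of_real m * (?z * of_real ?c - 1)) \<ge> m * ?q"
    using zc_bound[of "\<omega> * T" ?c] m0 by (simp add: norm_mult)
  have n2: "cmod (\<i> * of_real \<omega> * ?z * of_real ?s) \<le> \<bar>\<omega>\<bar>"
    by (simp add: norm_mult mult_left_le)
  have wb: "cmod w \<ge> m * ?q / 2"
  proof -
    have "cmod w \<ge> cmod (of_real m * (?z * of_real ?c - 1)) - cmod (\<i> * of_real \<omega> * ?z * of_real ?s)"
      unfolding w_alt by (rule norm_triangle_ineq2)
    then show ?thesis using n1 n2 mq by linarith
  qed
  have pos: "m^2 - \<omega>^2 > 0"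
  proof -
    have "\<bar>\<omega>\<bar> < m" using m2 om by simp
    then have "\<bar>\<omega>\<bar>^2 < m^2" by (intro power_strict_mono) auto
    then show ?thesis by simp
  qed
  have le: "m^2 - \<omega>^2 \<le> m^2" by simp
  have nS: "cmod w = (m^2 - \<omega>^2) * cmod (Sf T \<omega> m)"
  proof -
    have "cmod w = cmod (complex_of_real (\<omega>^2 - m^2)) * cmod (Sf T \<omega> m)" unfolding wS[symmetric] by (rule norm_mult)
    then have "cmod w = \<bar>\<omega>^2 - m^2\<bar> * cmod (Sf T \<omega> m)" by (simp only: norm_of_real)
    then show ?thesis using pos by simp
  qed
  have Sb: "m * cmod (Sf T \<omega> m) \<ge> ?q / 2"
  proof -
    have "m * ?q / 2 \<le> m^2 * cmod (Sf T \<omega> m)"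
      using wb nS le by (smt (verit) mult_right_mono norm_ge_zero)
    then have "m * (?q / 2) \<le> m * (m * cmod (Sf T \<omega> m))" by (simp add: power2_eq_square algebra_simps)
    then show ?thesis using m0 by simp
  qed
  have b1: "1 / (m * cmod (Sf T \<omega> m)) \<le> 2 / ?q"
  proof -
    have p: "m * cmod (Sf T \<omega> m) > 0" using Sb q0 by linarith
    show ?thesis using Sb p q0 by (simp add: field_simps)
  qed
  define v where "v = ?z * (- of_real m * of_real ?s - \<i> * of_real \<omega> * of_real ?c) + \<i> * of_real \<omega>"
  have vC: "of_real (\<omega>^2 - m^2) * Cf T \<omega> m = v" using Cf_ident[of T \<omega> m] T by (simp add: v_def)
  have vb: "cmod v \<le> 2 * m"
  proof -
    have "cmod v \<le> cmod (?z * (- of_real m * of_real ?s - \<i> * of_real \<omega> * of_real ?c)) + cmod (\<i> * of_real \<omega>)"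
      unfolding v_def by (rule norm_triangle_ineq)
    also have "\<dots> \<le> (m + \<bar>\<omega>\<bar>) + \<bar>\<omega>\<bar>"
    proof -
      have "cmod (- of_real m * of_real ?s - \<i> * of_real \<omega> * of_real ?c) \<le> cmod (- of_real m * of_real ?s :: complex) + cmod (\<i> * of_real \<omega> * of_real ?c)"
        by (rule norm_triangle_ineq4)
      also have "\<dots> \<le> m + \<bar>\<omega>\<bar>"
      proof -
        have "m * \<bar>?s\<bar> \<le> m" using m0 by (simp add: mult_left_le)
        moreover have "\<bar>\<omega>\<bar> * \<bar>?c\<bar> \<le> \<bar>\<omega>\<bar>" by (simp add: mult_left_le)
        moreover have "cmod (- of_real m * of_real ?s :: complex) + cmod (\<i> * of_real \<omega> * of_real ?c) = m * \<bar>?s\<bar> + \<bar>\<omega>\<bar> * \<bar>?c\<bar>"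
          using m0 by (simp add: norm_mult)
        ultimately show ?thesis by linarith
      qed
      finally show ?thesis by (simp add: norm_mult)
    qed
    finally show ?thesis using m2 by linarith
  qed
  have nC: "cmod v = (m^2 - \<omega>^2) * cmod (Cf T \<omega> m)"
  proof -
    have "cmod v = cmod (complex_of_real (\<omega>^2 - m^2)) * cmod (Cf T \<omega> m)" unfolding vC[symmetric] by (rule norm_mult)
    then have "cmod v = \<bar>\<omega>^2 - m^2\<bar> * cmod (Cf T \<omega> m)" by (simp only: norm_of_real)
    then show ?thesis using pos by simp
  qed
  have "cmod (Cf T \<omega> m / Sf T \<omega> m) = cmod v / cmod w"
    using nS nC pos by (simp add: norm_divide)
  also have "\<dots> \<le> (2 * m) / (m * ?q / 2)"
    using vb wb m0 q0 by (intro frac_le) auto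
  also have "\<dots> = 4 / ?q" using m0 by (simp add: field_simps)
  finally show ?thesis using b1 by simp
qed

lemma const_bounds:
  fixes lam :: "nat \<Rightarrow> real"
  assumes lp: "\<forall>k. lam k > 0" and lim: "filterlim lam at_top sequentially"
    and T: "T > 0" and om: "\<omega> \<noteq> 0" and q: "sin (\<omega> * T) \<noteq> 0"
  shows "\<exists>K1 K2 l. l > 0 \<and> K1 \<ge> 0 \<and> K2 \<ge> 0 \<and> (\<forall>k. l \<le> lam k) \<and>
     (\<forall>k. Sf T \<omega> (sqrt (lam k)) \<noteq> 0 \<and>
        1 / (sqrt (lam k) * cmod (Sf T \<omega> (sqrt (lam k)))) \<le> K1 \<and>
        cmod (Cf T \<omega> (sqrt (lam k)) / Sf T \<omega> (sqrt (lam k))) \<le> K2)"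
proof -
  define R where "R = 2 * \<bar>\<omega>\<bar> / \<bar>sin (\<omega> * T)\<bar>"
  have "eventually (\<lambda>k. max 1 (R^2) \<le> lam k) sequentially"
    using lim unfolding filterlim_at_top by blast
  then obtain N where N: "\<And>k. k \<ge> N \<Longrightarrow> max 1 (R^2) \<le> lam k"
    by (auto simp: eventually_sequentially)
  define f1 where "f1 k = 1 / (sqrt (lam k) * cmod (Sf T \<omega> (sqrt (lam k))))" for k
  define f2 where "f2 k = cmod (Cf T \<omega> (sqrt (lam k)) / Sf T \<omega> (sqrt (lam k)))" for k
  define K1 where "K1 = 2 / \<bar>sin (\<omega> * T)\<bar> + (\<Sum>k<N. f1 k)"
  define K2 where "K2 = 4 / \<bar>sin (\<omega> * T)\<bar> + (\<Sum>k<N. f2 k)"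
  define l where "l = Min (insert 1 (lam ` {..<N}))"
  have f1p: "f1 k \<ge> 0" for k using lp unfolding f1_def
    by (metis divide_nonneg_nonneg mult_nonneg_nonneg norm_ge_zero real_sqrt_ge_zero zero_le_one less_imp_le)
  have f2p: "f2 k \<ge> 0" for k by (simp add: f2_def)
  have l0: "l > 0" unfolding l_def using lp by (subst Min_gr_iff) auto
  have ll: "l \<le> lam k" for k
  proof (cases "k < N")
    case True then show ?thesis unfolding l_def by (intro Min_le) auto
  next
    case False
    then have "1 \<le> lam k" using N[of k] by simp
    moreover have "l \<le> 1" unfolding l_def by (intro Min_le) auto
    ultimately show ?thesis by simp
  qed
  have Snz: "Sf T \<omega> (sqrt (lam k)) \<noteq> 0" for k
    using Sf_nz[OF _ T q] lp by simp
  have b: "f1 k \<le> K1 \<and> f2 k \<le> K2" for k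
  proof (cases "k < N")
    case True
    have "f1 k \<le> (\<Sum>k<N. f1 k)" using True f1p by (intro member_le_sum) auto
    moreover have "f2 k \<le> (\<Sum>k<N. f2 k)" using True f2p by (intro member_le_sum) auto
    moreover have "2 / \<bar>sin (\<omega> * T)\<bar> \<ge> 0" "4 / \<bar>sin (\<omega> * T)\<bar> \<ge> 0" by auto
    ultimately show ?thesis unfolding K1_def K2_def by linarith
  next
    case False
    then have "R^2 \<le> lam k" using N[of k] by simp
    then have "sqrt (R^2) \<le> sqrt (lam k)" by (rule real_sqrt_le_mono)
    moreover have "R \<ge> 0" by (simp add: R_def)
    ultimately have "R \<le> sqrt (lam k)" by simp
    then have "f1 k \<le> 2 / \<bar>sin (\<omega> * T)\<bar> \<and> f2 k \<le> 4 / \<bar>sin (\<omega> * T)\<bar>"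
      unfolding f1_def f2_def R_def by (intro big_bounds T om q)
    moreover have "(\<Sum>k<N. f1 k) \<ge> 0" "(\<Sum>k<N. f2 k) \<ge> 0" using f1p f2p by (auto intro: sum_nonneg)
    ultimately show ?thesis unfolding K1_def K2_def by linarith
  qed
  have "K1 \<ge> 0" "K2 \<ge> 0" using b[of 0] f1p[of 0] f2p[of 0] by linarith+
  then show ?thesis using l0 ll Snz b unfolding f1_def f2_def by blast
qed

lemma at_nbot: "T > 0 \<Longrightarrow> t \<in> {0..T} \<Longrightarrow> at t within {0..(T::real)} \<noteq> bot"
  by (metis atLeastAtMost_iff at_within_Icc_at_left at_within_Icc_at_right at_within_Icc_at
     trivial_limit_at_left_real trivial_limit_at_right_real trivial_limit_at order.order_iff_strict)

lemma powi_pos': "x > (0::real) \<Longrightarrow> x powi q > 0"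
  by (simp add: power_int_def)

lemma Hsq_eq:
  assumes lp: "\<forall>k. lam k > 0" and sm: "summable (\<lambda>k. lam k powi q * (cmod (w k))\<^sup>2)"
  shows "Hsq lam q w = ennreal (\<Sum>k. lam k powi q * (cmod (w k))\<^sup>2)"
    "inH lam q w" "Hnorm lam q w = sqrt (\<Sum>k. lam k powi q * (cmod (w k))\<^sup>2)"
proof -
  have nn: "\<And>k. 0 \<le> lam k powi q * (cmod (w k))\<^sup>2"
    using lp powi_pos' by (simp add: less_imp_le)
  show h: "Hsq lam q w = ennreal (\<Sum>k. lam k powi q * (cmod (w k))\<^sup>2)"
    unfolding Hsq_def by (rule suminf_ennreal2[OF nn sm])
  show "inH lam q w" unfolding inH_def h by simp
  have "(\<Sum>k. lam k powi q * (cmod (w k))\<^sup>2) \<ge> 0" using nn sm by (simp add: suminf_nonneg)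
  then show "Hnorm lam q w = sqrt (\<Sum>k. lam k powi q * (cmod (w k))\<^sup>2)"
    unfolding Hnorm_def h by simp
qed

lemma inH_summ:
  assumes lp: "\<forall>k. lam k > 0" and h: "inH lam q w"
  shows "summable (\<lambda>k. lam k powi q * (cmod (w k))\<^sup>2)"
proof (rule summable_suminf_not_top)
  show "\<And>k. 0 \<le> lam k powi q * (cmod (w k))\<^sup>2"
    using lp powi_pos' by (simp add: less_imp_le)
  show "(\<Sum>k. ennreal (lam k powi q * (cmod (w k))\<^sup>2)) \<noteq> top"
    using h by (simp add: inH_def Hsq_def)
qed

lemma inH_Hnorm:
  assumes lp: "\<forall>k. lam k > 0" and h: "inH lam q w"
  shows "Hnorm lam q w = sqrt (\<Sum>k. lam k powi q * (cmod (w k))\<^sup>2)"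
  using Hsq_eq(3)[OF lp inH_summ[OF lp h]] .

lemma H_tendsto:
  fixes X :: "'b \<Rightarrow> coeffs"
  assumes lp: "\<forall>k. lam k > 0" and F: "F \<noteq> bot"
    and lim: "\<And>k. ((\<lambda>s. X s k) \<longlongrightarrow> 0) F"
    and bd: "eventually (\<lambda>s. \<forall>k. (cmod (X s k))\<^sup>2 \<le> M k) F" and sm: "summable M"
  shows "((\<lambda>s. Hnorm lam 0 (X s)) \<longlongrightarrow> 0) F"
proof -
  have ev: "eventually (\<lambda>s. Hnorm lam 0 (X s) = sqrt (\<Sum>k. (cmod (X s k))\<^sup>2)) F"
    using bd
  proof eventually_elim
    case (elim s)
    have "summable (\<lambda>k. (cmod (X s k))\<^sup>2)"
      by (rule summable_comparison_test[OF _ sm]) (use elim in auto)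
    then show ?case using Hsq_eq(3)[OF lp, of 0 "X s"] by simp
  qed
  have "((\<lambda>s. \<Sum>k. (cmod (X s k))\<^sup>2) \<longlongrightarrow> (\<Sum>k. (0::real))) F"
  proof (rule tannerys_theorem[THEN conjunct2, THEN conjunct2])
    show "((\<lambda>s. (cmod (X s k))\<^sup>2) \<longlongrightarrow> 0) F" for k
      using tendsto_power[OF tendsto_norm_zero[OF lim[of k]], of 2] by simp
    show "\<forall>\<^sub>F (k, s) in sequentially \<times>\<^sub>F F. norm ((cmod (X s k))\<^sup>2) \<le> M k"
    proof -
      have "\<forall>\<^sub>F (k, s) in sequentially \<times>\<^sub>F F. \<forall>k'. (cmod (X s k'))\<^sup>2 \<le> M k'"
        using eventually_prod2[where A=sequentially and B=F and P="\<lambda>s. \<forall>k'. (cmod (X s k'))\<^sup>2 \<le> M k'"] bd by simp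
      then show ?thesis by (rule eventually_mono) auto
    qed
  qed (use sm F in auto)
  then have "((\<lambda>s. sqrt (\<Sum>k. (cmod (X s k))\<^sup>2)) \<longlongrightarrow> 0) F"
    using tendsto_real_sqrt by fastforce
  moreover have "eventually (\<lambda>s. sqrt (\<Sum>k. (cmod (X s k))\<^sup>2) = Hnorm lam 0 (X s)) F"
    using ev by (rule eventually_mono) simp
  ultimately show ?thesis by (rule Lim_transform_eventually)
qed

lemma sq_diff_le: "(cmod (a - b))\<^sup>2 \<le> 2 * (cmod a)\<^sup>2 + 2 * (cmod b)\<^sup>2"
proof -
  have "cmod (a - b) \<le> cmod a + cmod b" by (rule norm_triangle_ineq4)
  then have "(cmod (a - b))\<^sup>2 \<le> (cmod a + cmod b)\<^sup>2" by (simp add: power_mono)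
  also have "\<dots> \<le> 2 * (cmod a)\<^sup>2 + 2 * (cmod b)\<^sup>2"
    by (smt (verit) zero_le_power2 power2_diff power2_sum)
  finally show ?thesis .
qed

lemma ev_within: "eventually (\<lambda>s. s \<in> S) (at t within S)"
  by (simp add: eventually_at_filter)

lemma ev_within_ne: "eventually (\<lambda>s. s \<in> S \<and> s \<noteq> t) (at t within S)"
  by (simp add: eventually_at_filter)

lemma inC0_lemma:
  assumes lp: "\<forall>k. lam k > 0" and T: "T > 0"
    and cont: "\<And>k. continuous_on {0..T} (\<lambda>s. u s k)"
    and bd: "\<And>k s. s \<in> {0..T} \<Longrightarrow> (cmod (u s k))\<^sup>2 \<le> B k" and sm: "summable B"
  shows "inC lam 0 T u" "\<And>t. t \<in> {0..T} \<Longrightarrow> Hnorm lam 0 (u t) \<le> sqrt (\<Sum>k. B k)"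
proof -
  have sm1: "summable (\<lambda>k. lam k powi 0 * (cmod (u t k))\<^sup>2)" if "t \<in> {0..T}" for t
    by (rule summable_comparison_test[OF _ sm]) (use bd that in auto)
  show "Hnorm lam 0 (u t) \<le> sqrt (\<Sum>k. B k)" if t: "t \<in> {0..T}" for t
  proof -
    have "Hnorm lam 0 (u t) = sqrt (\<Sum>k. lam k powi 0 * (cmod (u t k))\<^sup>2)"
      by (rule Hsq_eq(3)[OF lp sm1[OF t]])
    also have "\<dots> \<le> sqrt (\<Sum>k. B k)"
      using sm1[OF t] sm bd[OF t] by (intro real_sqrt_le_mono suminf_le) auto
    finally show ?thesis .
  qed
  have "inH lam 0 (u t)" if "t \<in> {0..T}" for t by (rule Hsq_eq(2)[OF lp sm1[OF that]])
  moreover have "((\<lambda>s. Hnorm lam 0 (u s - u t)) \<longlongrightarrow> 0) (at t within {0..T})" if t: "t \<in> {0..T}" for t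
  proof (rule H_tendsto[OF lp at_nbot[OF T t]])
    show "((\<lambda>s. (u s - u t) k) \<longlongrightarrow> 0) (at t within {0..T})" for k
    proof -
      have "((\<lambda>s. u s k) \<longlongrightarrow> u t k) (at t within {0..T})"
        using cont[of k] t by (simp add: continuous_on_def)
      then show ?thesis by (simp add: LIM_zero)
    qed
    show "\<forall>\<^sub>F s in at t within {0..T}. \<forall>k. (cmod ((u s - u t) k))\<^sup>2 \<le> 4 * B k"
      using ev_within
    proof (rule eventually_mono)
      fix s assume s: "s \<in> {0..T}"
      show "\<forall>k. (cmod ((u s - u t) k))\<^sup>2 \<le> 4 * B k"
        using sq_diff_le[of "u s k" "u t k" for k] bd[OF s] bd[OF t] by (smt (verit) fun_diff_def)
    qed
    show "summable (\<lambda>k. 4 * B k)" using sm by (rule summable_mult)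
  qed
  ultimately show "inC lam 0 T u" unfolding inC_def by blast
qed

lemma Cnorm_le:
  assumes T: "0 \<le> T" and b: "\<And>t. t \<in> {0..T} \<Longrightarrow> Hnorm lam q (u t) \<le> X"
  shows "Cnorm lam q T u \<le> X"
  unfolding Cnorm_def using T b by (intro cSUP_least) auto

lemma vd_limit:
  fixes f :: "real \<Rightarrow> complex"
  assumes "(f has_vector_derivative D) (at t within S)"
  shows "((\<lambda>s. (f s - f t) / of_real (s - t) - D) \<longlongrightarrow> 0) (at t within S)"
proof -
  have "((\<lambda>y. (1 / norm (y - t)) *\<^sub>R (f y - (f t + (y - t) *\<^sub>R D))) \<longlongrightarrow> 0) (at t within S)"
    using assms unfolding has_vector_derivative_def has_derivative_within by blast
  then have "((\<lambda>y. norm ((1 / norm (y - t)) *\<^sub>R (f y - (f t + (y - t) *\<^sub>R D)))) \<longlongrightarrow> 0) (at t within S)"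
    by (rule tendsto_norm_zero)
  moreover have "eventually (\<lambda>y. norm ((1 / norm (y - t)) *\<^sub>R (f y - (f t + (y - t) *\<^sub>R D))) = norm ((f y - f t) / of_real (y - t) - D)) (at t within S)"
    using ev_within_ne
  proof (rule eventually_mono)
    fix y assume "y \<in> S \<and> y \<noteq> t"
    then have ne: "y - t \<noteq> 0" by simp
    have "(f y - f t) / of_real (y - t) - D = (f y - (f t + (y - t) *\<^sub>R D)) / of_real (y - t)"
      using ne by (simp add: field_simps scaleR_conv_of_real)
    then show "norm ((1 / norm (y - t)) *\<^sub>R (f y - (f t + (y - t) *\<^sub>R D))) = norm ((f y - f t) / of_real (y - t) - D)"
      by (simp only: norm_divide norm_scaleR norm_of_real) (simp add: divide_inverse mult.commute)
  qed
  ultimately have "((\<lambda>y. norm ((f y - f t) / of_real (y - t) - D)) \<longlongrightarrow> 0) (at t within S)"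
    by (rule Lim_transform_eventually)
  then show ?thesis by (simp add: tendsto_norm_zero_iff)
qed

lemma hderiv_lemma:
  assumes lp: "\<forall>k. lam k > 0" and T: "T > 0"
    and d: "\<And>k t. t \<in> {0..T} \<Longrightarrow> ((\<lambda>s. u s k) has_vector_derivative u' t k) (at t within {0..T})"
    and b1: "\<And>k s t. s \<in> {0..T} \<Longrightarrow> t \<in> {0..T} \<Longrightarrow> (cmod ((u s k - u t k) / of_real (s - t)))\<^sup>2 \<le> B k"
    and b2: "\<And>k t. t \<in> {0..T} \<Longrightarrow> (cmod (u' t k))\<^sup>2 \<le> B k"
    and sm: "summable B"
  shows "has_H_deriv lam T u u'"
  unfolding has_H_deriv_def
proof
  fix t assume t: "t \<in> {0..T}"
  show "((\<lambda>s. Hnorm lam 0 ((\<lambda>k. (u s k - u t k) / complex_of_real (s - t)) - u' t)) \<longlongrightarrow> 0) (at t within {0..T})"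
  proof (rule H_tendsto[OF lp at_nbot[OF T t]])
    show "((\<lambda>s. ((\<lambda>k. (u s k - u t k) / complex_of_real (s - t)) - u' t) k) \<longlongrightarrow> 0) (at t within {0..T})" for k
      using vd_limit[OF d[OF t, of k]] by simp
    show "\<forall>\<^sub>F s in at t within {0..T}. \<forall>k. (cmod (((\<lambda>k. (u s k - u t k) / complex_of_real (s - t)) - u' t) k))\<^sup>2 \<le> 4 * B k"
      using ev_within
    proof (rule eventually_mono)
      fix s assume s: "s \<in> {0..T}"
      show "\<forall>k. (cmod (((\<lambda>k. (u s k - u t k) / complex_of_real (s - t)) - u' t) k))\<^sup>2 \<le> 4 * B k"
      proof
        fix k
        have "(cmod (((\<lambda>k. (u s k - u t k) / complex_of_real (s - t)) - u' t) k))\<^sup>2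
            = (cmod ((u s k - u t k) / complex_of_real (s - t) - u' t k))\<^sup>2" by simp
        also have "\<dots> \<le> 2 * (cmod ((u s k - u t k) / complex_of_real (s - t)))\<^sup>2 + 2 * (cmod (u' t k))\<^sup>2"
          by (rule sq_diff_le)
        also have "\<dots> \<le> 4 * B k" using b1[OF s t, of k] b2[OF t, of k] by simp
        finally show "(cmod (((\<lambda>k. (u s k - u t k) / complex_of_real (s - t)) - u' t) k))\<^sup>2 \<le> 4 * B k" .
      qed
    qed
    show "summable (\<lambda>k. 4 * B k)" using sm by (rule summable_mult)
  qed
qed

lemma Linf_lemma:
  assumes meas: "(\<lambda>t. Hsq lam 1 (u t)) \<in> borel_measurable (restrict_space lborel {0..T})"
    and b: "\<And>t. t \<in> {0..T} \<Longrightarrow> Hsq lam 1 (u t) \<le> ennreal X" and X: "X \<ge> 0"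
  shows "inLinf lam 1 T u" "Linf_norm lam 1 T u \<le> sqrt X"
proof -
  have e: "Linf_sq lam 1 T u \<le> ennreal X"
    unfolding Linf_sq_def using meas
    by (rule esssup_I) (rule AE_I2, use b in \<open>auto simp: space_restrict_space\<close>)
  then show "inLinf lam 1 T u" unfolding inLinf_def using le_less_trans by fastforce
  have "enn2real (Linf_sq lam 1 T u) \<le> enn2real (ennreal X)"
    using e by (intro enn2real_mono) auto
  then show "Linf_norm lam 1 T u \<le> sqrt X" unfolding Linf_norm_def using X by simp
qed

lemma fsol_bd: "(cmod (fsol A B m t))\<^sup>2 \<le> 2 * ((cmod A)\<^sup>2 + (cmod B)\<^sup>2)"
proof -
  have "cmod (fsol A B m t) \<le> cmod A + cmod B"
  proof -
    have "cmod (fsol A B m t) \<le> cmod A * \<bar>cos (m*t)\<bar> + cmod B * \<bar>sin (m*t)\<bar>"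
      unfolding fsol_def by (metis norm_mult norm_of_real norm_triangle_ineq)
    also have "\<dots> \<le> cmod A + cmod B" by (intro add_mono mult_left_le) auto
    finally show ?thesis .
  qed
  then have "(cmod (fsol A B m t))\<^sup>2 \<le> (cmod A + cmod B)\<^sup>2" by (simp add: power_mono)
  also have "\<dots> \<le> 2 * ((cmod A)\<^sup>2 + (cmod B)\<^sup>2)" by (smt (verit) zero_le_power2 power2_diff power2_sum)
  finally show ?thesis .
qed

lemma dsol_bd: "(cmod (dsol A B m t))\<^sup>2 \<le> 2 * m\<^sup>2 * ((cmod A)\<^sup>2 + (cmod B)\<^sup>2)"
proof -
  have "dsol A B m t = of_real m * fsol B (- A) m t" by (simp add: dsol_def fsol_def)
  then have "(cmod (dsol A B m t))\<^sup>2 = m\<^sup>2 * (cmod (fsol B (- A) m t))\<^sup>2" by (simp add: norm_mult power_mult_distrib)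
  also have "\<dots> \<le> m\<^sup>2 * (2 * ((cmod B)\<^sup>2 + (cmod (- A))\<^sup>2))" by (intro mult_left_mono fsol_bd) auto
  finally show ?thesis by (simp add: algebra_simps)
qed

lemma cos_lip: "\<bar>cos x - cos y\<bar> \<le> \<bar>x - (y::real)\<bar>"
proof -
  have "\<bar>cos x - cos y\<bar> = 2 * \<bar>sin ((x + y) / 2)\<bar> * \<bar>sin ((y - x) / 2)\<bar>" by (simp add: cos_diff_cos abs_mult)
  also have "\<dots> \<le> 2 * 1 * \<bar>(y - x) / 2\<bar>" by (intro mult_mono abs_sin_x_le_abs_x) auto
  finally show ?thesis by simp
qed

lemma sin_lip: "\<bar>sin x - sin y\<bar> \<le> \<bar>x - (y::real)\<bar>"
proof -
  have "\<bar>sin x - sin y\<bar> = 2 * \<bar>sin ((x - y) / 2)\<bar> * \<bar>cos ((x + y) / 2)\<bar>" by (simp add: sin_diff_sin abs_mult)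
  also have "\<dots> \<le> 2 * \<bar>(x - y) / 2\<bar> * 1" by (intro mult_mono abs_sin_x_le_abs_x) auto
  finally show ?thesis by simp
qed

lemma dq_bd:
  assumes m: "m \<ge> 0"
  shows "(cmod ((fsol A B m s - fsol A B m t) / of_real (s - t)))\<^sup>2 \<le> 2 * m\<^sup>2 * ((cmod A)\<^sup>2 + (cmod B)\<^sup>2)"
proof (cases "s = t")
  case True then show ?thesis by simp
next
  case False
  have "fsol A B m s - fsol A B m t = A * of_real (cos (m * s) - cos (m*t)) + B * of_real (sin (m * s) - sin (m*t))"
    by (simp add: fsol_def algebra_simps)
  then have "cmod (fsol A B m s - fsol A B m t) \<le> cmod A * \<bar>cos (m * s) - cos (m*t)\<bar> + cmod B * \<bar>sin (m * s) - sin (m*t)\<bar>"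
    by (metis norm_mult norm_of_real norm_triangle_ineq)
  also have "\<dots> \<le> cmod A * (m * \<bar>s - t\<bar>) + cmod B * (m * \<bar>s - t\<bar>)"
  proof -
    have "\<bar>m * s - m*t\<bar> = m * \<bar>s - t\<bar>" using m by (simp add: abs_mult right_diff_distrib[symmetric])
    then show ?thesis using cos_lip[of "m * s" "m*t"] sin_lip[of "m * s" "m*t"]
      by (intro add_mono mult_left_mono) auto
  qed
  finally have "cmod ((fsol A B m s - fsol A B m t) / of_real (s - t)) \<le> m * (cmod A + cmod B)"
    using False by (simp add: norm_divide divide_le_eq algebra_simps del: of_real_diff)
  then have "(cmod ((fsol A B m s - fsol A B m t) / of_real (s - t)))\<^sup>2 \<le> (m * (cmod A + cmod B))\<^sup>2"
    by (simp add: power_mono)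
  also have "\<dots> = m\<^sup>2 * (cmod A + cmod B)\<^sup>2" by (simp add: power_mult_distrib)
  also have "\<dots> \<le> m\<^sup>2 * (2 * ((cmod A)\<^sup>2 + (cmod B)\<^sup>2))"
    by (intro mult_left_mono) (smt (verit) zero_le_power2 power2_diff power2_sum, simp)
  finally show ?thesis by (simp add: algebra_simps)
qed

lemma inH0_summ:
  assumes lp: "\<forall>k. lam k > 0" and h: "inH lam 0 w"
  shows "summable (\<lambda>k. (cmod (w k))\<^sup>2)"
  using inH_summ[OF lp h] by simp

lemma inH0_I:
  assumes lp: "\<forall>k. lam k > 0" and h: "summable (\<lambda>k. (cmod (w k))\<^sup>2)"
  shows "inH lam 0 w"
  using Hsq_eq(2)[OF lp, of 0 w] h by simp

lemma comp_le_Hnorm: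
  assumes lp: "\<forall>k. lam k > 0" and h: "inH lam 0 w"
  shows "cmod (w k) \<le> Hnorm lam 0 w"
proof -
  have s: "summable (\<lambda>k. (cmod (w k))\<^sup>2)" by (rule inH0_summ[OF lp h])
  have "(cmod (w k))\<^sup>2 \<le> (\<Sum>k. (cmod (w k))\<^sup>2)"
    using sum_le_suminf[OF s, of "{k}"] by simp
  then have "sqrt ((cmod (w k))\<^sup>2) \<le> sqrt (\<Sum>k. (cmod (w k))\<^sup>2)" by (rule real_sqrt_le_mono)
  then show ?thesis using inH_Hnorm[OF lp h] by simp
qed

lemma inH0_diff:
  assumes lp: "\<forall>k. lam k > 0" and h1: "inH lam 0 w" and h2: "inH lam 0 z"
  shows "inH lam 0 (\<lambda>k. c * w k - d * z k)"
proof (rule inH0_I[OF lp])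
  have "summable (\<lambda>k. 2 * ((cmod c)\<^sup>2 * (cmod (w k))\<^sup>2) + 2 * ((cmod d)\<^sup>2 * (cmod (z k))\<^sup>2))"
    using inH0_summ[OF lp h1] inH0_summ[OF lp h2]
    by (intro summable_add summable_mult) 
  then show "summable (\<lambda>k. (cmod (c * w k - d * z k))\<^sup>2)"
  proof (rule summable_comparison_test'[where N=0])
    fix n :: nat
    show "norm ((cmod (c * w n - d * z n))\<^sup>2) \<le> 2 * ((cmod c)\<^sup>2 * (cmod (w n))\<^sup>2) + 2 * ((cmod d)\<^sup>2 * (cmod (z n))\<^sup>2)"
      using sq_diff_le[of "c * w n" "d * z n"] by (simp add: norm_mult power_mult_distrib)
  qed
qed

lemma vd_limit_conv:
  fixes f :: "real \<Rightarrow> complex"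
  assumes "((\<lambda>s. (f s - f t) / of_real (s - t) - D) \<longlongrightarrow> 0) (at t within S)"
  shows "(f has_vector_derivative D) (at t within S)"
  unfolding has_vector_derivative_def has_derivative_within
proof
  show "bounded_linear (\<lambda>x. x *\<^sub>R D)" by (rule bounded_linear_scaleR_left)
  have "((\<lambda>y. norm ((f y - f t) / of_real (y - t) - D)) \<longlongrightarrow> 0) (at t within S)"
    using assms by (rule tendsto_norm_zero)
  moreover have "eventually (\<lambda>y. norm ((f y - f t) / of_real (y - t) - D) = norm ((1 / norm (y - t)) *\<^sub>R (f y - (f t + (y - t) *\<^sub>R D)))) (at t within S)"
    using ev_within_ne
  proof (rule eventually_mono)
    fix y assume "y \<in> S \<and> y \<noteq> t"
    then have ne: "y - t \<noteq> 0" by simp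
    have "(f y - f t) / of_real (y - t) - D = (f y - (f t + (y - t) *\<^sub>R D)) / of_real (y - t)"
      using ne by (simp add: field_simps scaleR_conv_of_real)
    then show "norm ((f y - f t) / of_real (y - t) - D) = norm ((1 / norm (y - t)) *\<^sub>R (f y - (f t + (y - t) *\<^sub>R D)))"
      by (simp only: norm_divide norm_scaleR norm_of_real) (simp add: divide_inverse mult.commute)
  qed
  ultimately have "((\<lambda>y. norm ((1 / norm (y - t)) *\<^sub>R (f y - (f t + (y - t) *\<^sub>R D)))) \<longlongrightarrow> 0) (at t within S)"
    by (rule Lim_transform_eventually)
  then show "((\<lambda>y. (1 / norm (y - t)) *\<^sub>R (f y - (f t + (y - t) *\<^sub>R D))) \<longlongrightarrow> 0) (at t within S)"
    by (simp only: tendsto_norm_zero_iff)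
qed

lemma cont_from_inC:
  assumes lp: "\<forall>k. lam k > 0" and c: "inC lam 0 T v"
  shows "continuous_on {0..T} (\<lambda>s. v s k)"
  unfolding continuous_on_def
proof
  fix t assume t: "t \<in> {0..T}"
  have h: "inH lam 0 (v s)" if "s \<in> {0..T}" for s using c that by (simp add: inC_def)
  have lim: "((\<lambda>s. Hnorm lam 0 (v s - v t)) \<longlongrightarrow> 0) (at t within {0..T})" using c t by (simp add: inC_def)
  have "((\<lambda>s. v s k - v t k) \<longlongrightarrow> 0) (at t within {0..T})"
  proof (rule Lim_null_comparison[OF _ lim])
    show "\<forall>\<^sub>F s in at t within {0..T}. cmod (v s k - v t k) \<le> Hnorm lam 0 (v s - v t)"
      using ev_within
    proof (rule eventually_mono)
      fix s assume s: "s \<in> {0..T}"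
      have "inH lam 0 (\<lambda>k. 1 * v s k - 1 * v t k)" by (rule inH0_diff[OF lp h[OF s] h[OF t]])
      then have "inH lam 0 (v s - v t)" by (simp add: fun_diff_def)
      from comp_le_Hnorm[OF lp this, of k] show "cmod (v s k - v t k) \<le> Hnorm lam 0 (v s - v t)" by simp
    qed
  qed
  then show "((\<lambda>s. v s k) \<longlongrightarrow> v t k) (at t within {0..T})" by (simp add: LIM_zero_iff)
qed

lemma deriv_from_H:
  assumes lp: "\<forall>k. lam k > 0" and c: "inC lam 0 T v" and c': "inC lam 0 T v'" and d: "has_H_deriv lam T v v'"
    and t: "t \<in> {0..T}"
  shows "((\<lambda>s. v s k) has_vector_derivative v' t k) (at t within {0..T})"
proof (rule vd_limit_conv)
  have h: "inH lam 0 (v s)" if "s \<in> {0..T}" for s using c that by (simp add: inC_def)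
  have h': "inH lam 0 (v' t)" using c' t by (simp add: inC_def)
  let ?W = "\<lambda>s. (\<lambda>k. (v s k - v t k) / complex_of_real (s - t)) - v' t"
  have lim: "((\<lambda>s. Hnorm lam 0 (?W s)) \<longlongrightarrow> 0) (at t within {0..T})" using d t by (simp add: has_H_deriv_def)
  show "((\<lambda>s. (v s k - v t k) / of_real (s - t) - v' t k) \<longlongrightarrow> 0) (at t within {0..T})"
  proof (rule Lim_null_comparison[OF _ lim])
    show "\<forall>\<^sub>F s in at t within {0..T}. cmod ((v s k - v t k) / of_real (s - t) - v' t k) \<le> Hnorm lam 0 (?W s)"
      using ev_within
    proof (rule eventually_mono)
      fix s assume s: "s \<in> {0..T}"
      have "inH lam 0 (\<lambda>k. (1 / of_real (s - t)) * v s k - (1 / of_real (s - t)) * v t k)"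
        by (rule inH0_diff[OF lp h[OF s] h[OF t]])
      from inH0_diff[OF lp this h', of 1 1] have "inH lam 0 (?W s)"
        by (simp add: fun_diff_def diff_divide_distrib)
      from comp_le_Hnorm[OF lp this, of k]
      show "cmod ((v s k - v t k) / of_real (s - t) - v' t k) \<le> Hnorm lam 0 (?W s)" by simp
    qed
  qed
qed

lemma sol_repr:
  assumes lp: "\<forall>k. lam k > 0" and T: "T > 0" and sol: "is_solution lam T \<omega> a g v v'"
  shows "\<forall>t\<in>{0..T}. v t k = fsol (a k) (v' 0 k / of_real (sqrt (lam k))) (sqrt (lam k)) t \<and>
                     v' t k = dsol (a k) (v' 0 k / of_real (sqrt (lam k))) (sqrt (lam k)) t"
    "(v' 0 k / of_real (sqrt (lam k))) * Sf T \<omega> (sqrt (lam k)) = g k - a k * Cf T \<omega> (sqrt (lam k))"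
proof -
  have c: "inC lam 0 T v" and c': "inC lam 0 T v'" and d: "has_H_deriv lam T v v'"
    and w: "wave_eq lam T v v'" and a: "v 0 = a"
    and ig: "\<And>k. integral {0..T} (\<lambda>t. exp (\<i> * complex_of_real (\<omega> * t)) * v t k) = g k"
    using sol by (auto simp: is_solution_def inW1inf_def)
  define m where "m = sqrt (lam k)"
  have m0: "m > 0" using lp by (simp add: m_def)
  have mm: "complex_of_real (m^2) = of_real (lam k)" using lp by (simp add: m_def less_imp_le)
  have d1: "((\<lambda>s. v s k) has_vector_derivative v' t k) (at t within {0..T})" if "t \<in> {0..T}" for t
    by (rule deriv_from_H[OF lp c c' d that])
  have cv: "continuous_on {0..T} (\<lambda>s. v s k)" by (rule cont_from_inC[OF lp c])
  have d2: "((\<lambda>s. v' s k) has_vector_derivative (- of_real (m^2) * v t k)) (at t within {0..T})" if t: "t \<in> {0..T}" for t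
  proof -
    have ch: "continuous_on {0..T} (\<lambda>r. - complex_of_real (lam k) * v r k)"
      by (intro continuous_intros cv)
    have "((\<lambda>u. integral {0..u} (\<lambda>r. - complex_of_real (lam k) * v r k)) has_vector_derivative (- complex_of_real (lam k) * v t k)) (at t within {0..T})"
      by (rule integral_has_vector_derivative[OF ch t])
    then have D: "((\<lambda>u. integral {0..u} (\<lambda>r. - complex_of_real (lam k) * v r k) + v' 0 k) has_vector_derivative (- complex_of_real (lam k) * v t k)) (at t within {0..T})"
      by (simp only: has_vector_derivative_add_const)
    have vi: "v' u k = integral {0..u} (\<lambda>r. - complex_of_real (lam k) * v r k) + v' 0 k" if "u \<in> {0..T}" for u
      using w that unfolding wave_eq_def by (metis atLeastAtMost_iff diff_eq_eq order_refl)
    have "((\<lambda>s. v' s k) has_vector_derivative (- complex_of_real (lam k) * v t k)) (at t within {0..T})"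
      using has_vector_derivative_transform[OF t vi D] .
    then show ?thesis using mm by simp
  qed
  have rep: "\<forall>t\<in>{0..T}. v t k = fsol (v 0 k) (v' 0 k / of_real m) m t \<and> v' t k = dsol (v 0 k) (v' 0 k / of_real m) m t"
    by (rule ode_unique[OF m0 _ d1 d2]) (use T in auto)
  define B where "B = v' 0 k / of_real m"
  have rep': "\<forall>t\<in>{0..T}. v t k = fsol (a k) B m t \<and> v' t k = dsol (a k) B m t"
    using rep unfolding a B_def[symmetric] .
  then show "\<forall>t\<in>{0..T}. v t k = fsol (a k) (v' 0 k / of_real (sqrt (lam k))) (sqrt (lam k)) t \<and>
                     v' t k = dsol (a k) (v' 0 k / of_real (sqrt (lam k))) (sqrt (lam k)) t"
    unfolding m_def[symmetric] B_def[symmetric] .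
  have "g k = integral {0..T} (\<lambda>t. exp (\<i> * complex_of_real (\<omega> * t)) * v t k)" using ig by simp
  also have "\<dots> = integral {0..T} (\<lambda>t. exp (\<i> * complex_of_real (\<omega> * t)) * fsol (a k) B m t)"
    using rep' by (intro Henstock_Kurzweil_Integration.integral_cong) auto
  also have "\<dots> = a k * Cf T \<omega> m + B * Sf T \<omega> m" by (rule int_fsol)
  finally show "(v' 0 k / of_real (sqrt (lam k))) * Sf T \<omega> (sqrt (lam k)) = g k - a k * Cf T \<omega> (sqrt (lam k))"
    unfolding m_def[symmetric] B_def[symmetric] by simp
qed

lemma beta_bd:
  fixes S C G A :: complex and m K1 K2 :: real
  assumes m: "m > 0" and S: "S \<noteq> 0" and b1: "1 / (m * cmod S) \<le> K1" and b2: "cmod (C / S) \<le> K2"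
  shows "m\<^sup>2 * (cmod ((G - A * C) / S))\<^sup>2 \<le> 2 * K1\<^sup>2 * (m\<^sup>2 * m\<^sup>2 * (cmod G)\<^sup>2) + 2 * K2\<^sup>2 * (m\<^sup>2 * (cmod A)\<^sup>2)"
proof -
  have eq: "(G - A * C) / S = G / S - A * (C / S)" using S by (simp add: field_simps)
  have "cmod ((G - A * C) / S) \<le> cmod (G / S) + cmod (A * (C / S))"
    unfolding eq by (rule norm_triangle_ineq4)
  also have "cmod (G / S) \<le> K1 * m * cmod G"
  proof -
    have "cmod (G / S) = (m * cmod G) * (1 / (m * cmod S))" using m S by (simp add: norm_divide field_simps)
    also have "\<dots> \<le> (m * cmod G) * K1" using b1 m by (intro mult_left_mono) auto
    finally show ?thesis by (simp add: algebra_simps)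
  qed
  also have "cmod (A * (C / S)) \<le> K2 * cmod A"
  proof -
    have "cmod (A * (C / S)) = cmod A * cmod (C / S)" by (rule norm_mult)
    also have "\<dots> \<le> cmod A * K2" using b2 by (intro mult_left_mono) auto
    finally show ?thesis by (simp add: mult.commute)
  qed
  finally have nb: "cmod ((G - A * C) / S) \<le> K1 * m * cmod G + K2 * cmod A" by simp
  have "(cmod ((G - A * C) / S))\<^sup>2 \<le> (K1 * m * cmod G + K2 * cmod A)\<^sup>2"
    using nb by (intro power_mono) auto
  also have "\<dots> \<le> 2 * (K1 * m * cmod G)\<^sup>2 + 2 * (K2 * cmod A)\<^sup>2"
    by (smt (verit) zero_le_power2 power2_diff power2_sum)
  finally have "m\<^sup>2 * (cmod ((G - A * C) / S))\<^sup>2 \<le> m\<^sup>2 * (2 * (K1 * m * cmod G)\<^sup>2 + 2 * (K2 * cmod A)\<^sup>2)"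
    by (intro mult_left_mono) auto
  then show ?thesis by (simp add: power_mult_distrib algebra_simps)
qed

lemma meas_Hsq:
  "(\<lambda>t. Hsq lam q (\<lambda>k. fsol (A k) (B k) (M k) t)) \<in> borel_measurable (restrict_space lborel S)"
  unfolding Hsq_def
proof (rule borel_measurable_suminf_order)
  fix k
  have "continuous_on UNIV (\<lambda>t. lam k powi q * (cmod (fsol (A k) (B k) (M k) t))\<^sup>2)"
    unfolding fsol_def by (intro continuous_intros)
  then have "(\<lambda>t. lam k powi q * (cmod (fsol (A k) (B k) (M k) t))\<^sup>2) \<in> borel_measurable borel"
    by (rule borel_measurable_continuous_onI)
  then have "(\<lambda>t. ennreal (lam k powi q * (cmod (fsol (A k) (B k) (M k) t))\<^sup>2)) \<in> borel_measurable lborel"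
    by measurable
  then show "(\<lambda>t. ennreal (lam k powi q * (cmod (fsol (A k) (B k) (M k) t))\<^sup>2)) \<in> borel_measurable (restrict_space lborel S)"
    by (rule measurable_restrict_space1)
qed

lemma main_ag:
  fixes lam :: "nat \<Rightarrow> real" and T \<omega> K1 K2 l :: real and a g :: coeffs
  assumes lp: "\<forall>k. lam k > 0" and T: "T > 0"
    and Snz: "\<And>k. Sf T \<omega> (sqrt (lam k)) \<noteq> 0"
    and K1b: "\<And>k. 1 / (sqrt (lam k) * cmod (Sf T \<omega> (sqrt (lam k)))) \<le> K1"
    and K2b: "\<And>k. cmod (Cf T \<omega> (sqrt (lam k)) / Sf T \<omega> (sqrt (lam k))) \<le> K2"
    and l0: "l > 0" and ll: "\<And>k. l \<le> lam k"
    and ha: "inH lam 1 a" and hg: "inH lam 2 g"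
  defines "K3 \<equiv> 1 + 2 * K1\<^sup>2 + 2 * K2\<^sup>2"
  shows "(\<exists>u u'. is_solution lam T \<omega> a g u u') \<and>
           (\<forall>u1 u1' u2 u2'. is_solution lam T \<omega> a g u1 u1' \<longrightarrow> is_solution lam T \<omega> a g u2 u2'
               \<longrightarrow> (\<forall>t\<in>{0..T}. u1 t = u2 t)) \<and>
           (\<forall>u u'. is_solution lam T \<omega> a g u u' \<longrightarrow>
               W1inf_norm lam T u u' \<le> (sqrt (2 * K3 / l) + 2 * sqrt (2 * K3)) * (Hnorm lam 1 a + Hnorm lam 2 g))"
proof -
  define \<mu> where "\<mu> k = sqrt (lam k)" for k
  have \<mu>0: "\<mu> k > 0" for k using lp by (simp add: \<mu>_def)
  have \<mu>2: "(\<mu> k)\<^sup>2 = lam k" for k using lp by (simp add: \<mu>_def less_imp_le)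
  define \<beta> where "\<beta> k = (g k - a k * Cf T \<omega> (\<mu> k)) / Sf T \<omega> (\<mu> k)" for k
  define u where "u t k = fsol (a k) (\<beta> k) (\<mu> k) t" for t k
  define u' where "u' t k = dsol (a k) (\<beta> k) (\<mu> k) t" for t k
  have sa: "summable (\<lambda>k. lam k * (cmod (a k))\<^sup>2)" using inH_summ[OF lp ha] by simp
  have sg: "summable (\<lambda>k. (lam k)\<^sup>2 * (cmod (g k))\<^sup>2)" using inH_summ[OF lp hg] by simp
  have A2: "(Hnorm lam 1 a)\<^sup>2 = (\<Sum>k. lam k * (cmod (a k))\<^sup>2)"
    using inH_Hnorm[OF lp ha] sa by (simp add: suminf_nonneg lp less_imp_le)
  have G2: "(Hnorm lam 2 g)\<^sup>2 = (\<Sum>k. (lam k)\<^sup>2 * (cmod (g k))\<^sup>2)"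
    using inH_Hnorm[OF lp hg] sg by (simp add: suminf_nonneg)
  have bb: "lam k * (cmod (\<beta> k))\<^sup>2 \<le> 2 * K1\<^sup>2 * ((lam k)\<^sup>2 * (cmod (g k))\<^sup>2) + 2 * K2\<^sup>2 * (lam k * (cmod (a k))\<^sup>2)" for k
  proof -
    have s2: "(sqrt (lam k))\<^sup>2 = lam k" using \<mu>2[of k] by (simp add: \<mu>_def)
    show ?thesis
      using beta_bd[OF \<mu>0[unfolded \<mu>_def] Snz K1b K2b, of k "g k" "a k"] unfolding \<beta>_def \<mu>_def s2
      by (simp add: power2_eq_square)
  qed
  define P where "P k = lam k * ((cmod (a k))\<^sup>2 + (cmod (\<beta> k))\<^sup>2)" for k
  define Q where "Q k = (cmod (a k))\<^sup>2 + (cmod (\<beta> k))\<^sup>2" for k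
  have P0: "P k \<ge> 0" for k using lp by (simp add: P_def less_imp_le)
  have Pb: "P k \<le> (1 + 2 * K2\<^sup>2) * (lam k * (cmod (a k))\<^sup>2) + 2 * K1\<^sup>2 * ((lam k)\<^sup>2 * (cmod (g k))\<^sup>2)" for k
    using bb[of k] by (simp add: P_def algebra_simps)
  have sPb: "summable (\<lambda>k. (1 + 2 * K2\<^sup>2) * (lam k * (cmod (a k))\<^sup>2) + 2 * K1\<^sup>2 * ((lam k)\<^sup>2 * (cmod (g k))\<^sup>2))"
    using sa sg by (intro summable_add summable_mult)
  have sP: "summable P" by (rule summable_comparison_test'[OF sPb, where N=0]) (use P0 Pb in auto)
  have sumP: "(\<Sum>k. P k) \<le> K3 * (Hnorm lam 1 a + Hnorm lam 2 g)\<^sup>2"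
  proof -
    have "(\<Sum>k. P k) \<le> (\<Sum>k. (1 + 2 * K2\<^sup>2) * (lam k * (cmod (a k))\<^sup>2) + 2 * K1\<^sup>2 * ((lam k)\<^sup>2 * (cmod (g k))\<^sup>2))"
      by (rule suminf_le[OF Pb sP sPb])
    also have "\<dots> = (1 + 2 * K2\<^sup>2) * (Hnorm lam 1 a)\<^sup>2 + 2 * K1\<^sup>2 * (Hnorm lam 2 g)\<^sup>2"
      unfolding A2 G2 using sa sg by (simp add: suminf_add[symmetric] suminf_mult summable_mult)
    also have "\<dots> \<le> K3 * ((Hnorm lam 1 a)\<^sup>2 + (Hnorm lam 2 g)\<^sup>2)"
      unfolding K3_def by (simp add: algebra_simps add_mono)
    also have "\<dots> \<le> K3 * (Hnorm lam 1 a + Hnorm lam 2 g)\<^sup>2"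
    proof -
      have "Hnorm lam 1 a \<ge> 0" "Hnorm lam 2 g \<ge> 0" by (simp_all add: Hnorm_def)
      then have "(Hnorm lam 1 a)\<^sup>2 + (Hnorm lam 2 g)\<^sup>2 \<le> (Hnorm lam 1 a + Hnorm lam 2 g)\<^sup>2"
        by (simp add: power2_sum)
      moreover have "K3 \<ge> 0" unfolding K3_def by simp
      ultimately show ?thesis by (intro mult_left_mono)
    qed
    finally show ?thesis .
  qed
  have Q0: "Q k \<ge> 0" for k by (simp add: Q_def)
  have QP: "Q k \<le> P k / l" for k
  proof -
    have "l * Q k \<le> lam k * Q k" using ll[of k] Q0[of k] by (intro mult_right_mono) auto
    then show ?thesis using l0 by (simp add: P_def Q_def field_simps)
  qed
  have sQ: "summable Q" by (rule summable_comparison_test'[OF summable_divide[OF sP], where N=0]) (use Q0 QP in auto)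
  have sumQ: "(\<Sum>k. Q k) \<le> (\<Sum>k. P k) / l"
    using suminf_le[OF QP sQ summable_divide[OF sP]] by (simp add: suminf_divide[OF sP])
  have fb: "(cmod (u t k))\<^sup>2 \<le> 2 * Q k" for t k unfolding u_def Q_def by (rule fsol_bd)
  have db: "(cmod (u' t k))\<^sup>2 \<le> 2 * P k" for t k
    using dsol_bd[of "a k" "\<beta> k" "\<mu> k" t] unfolding u'_def P_def \<mu>2 by (simp add: algebra_simps)
  have qb: "(cmod ((u s k - u t k) / of_real (s - t)))\<^sup>2 \<le> 2 * P k" for s t k
    using dq_bd[of "\<mu> k" "a k" "\<beta> k" s t] \<mu>0[of k] unfolding u_def P_def \<mu>2 by (simp add: algebra_simps)
  have lb: "lam k powi 1 * (cmod (u t k))\<^sup>2 \<le> 2 * P k" for t k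
  proof -
    have "lam k * (cmod (u t k))\<^sup>2 \<le> lam k * (2 * Q k)" using fb lp by (intro mult_left_mono) (auto simp: less_imp_le)
    then show ?thesis by (simp add: P_def Q_def algebra_simps)
  qed
  have s2P: "summable (\<lambda>k. 2 * P k)" using sP by (rule summable_mult)
  have s2Q: "summable (\<lambda>k. 2 * Q k)" using sQ by (rule summable_mult)
  have cu: "inC lam 0 T u" and Hu: "\<And>t. t \<in> {0..T} \<Longrightarrow> Hnorm lam 0 (u t) \<le> sqrt (\<Sum>k. 2 * Q k)"
  proof -
    have contu: "\<And>k. continuous_on {0..T} (\<lambda>s. u s k)" unfolding u_def by (rule cont_fsol)
    show "inC lam 0 T u" "\<And>t. t \<in> {0..T} \<Longrightarrow> Hnorm lam 0 (u t) \<le> sqrt (\<Sum>k. 2 * Q k)"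
      using inC0_lemma[OF lp T contu fb s2Q] by auto
  qed
  have cu': "inC lam 0 T u'" and Hu': "\<And>t. t \<in> {0..T} \<Longrightarrow> Hnorm lam 0 (u' t) \<le> sqrt (\<Sum>k. 2 * P k)"
  proof -
    have contu: "\<And>k. continuous_on {0..T} (\<lambda>s. u' s k)" unfolding u'_def by (rule cont_dsol)
    show "inC lam 0 T u'" "\<And>t. t \<in> {0..T} \<Longrightarrow> Hnorm lam 0 (u' t) \<le> sqrt (\<Sum>k. 2 * P k)"
      using inC0_lemma[OF lp T contu db s2P] by auto
  qed
  have meas: "(\<lambda>t. Hsq lam 1 (u t)) \<in> borel_measurable (restrict_space lborel {0..T})"
    unfolding u_def by (rule meas_Hsq)
  have Hsqb: "Hsq lam 1 (u t) \<le> ennreal (\<Sum>k. 2 * P k)" for t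
  proof -
    have n: "\<And>k. 0 \<le> lam k powi 1 * (cmod (u t k))\<^sup>2" using lp by (simp add: less_imp_le)
    have sm: "summable (\<lambda>k. lam k powi 1 * (cmod (u t k))\<^sup>2)"
      by (rule summable_comparison_test'[OF s2P, where N=0]) (use lb n in auto)
    show ?thesis unfolding Hsq_eq(1)[OF lp sm]
      by (intro ennreal_leI suminf_le[OF lb sm s2P])
  qed
  have X0: "(\<Sum>k. 2 * P k) \<ge> 0" using s2P P0 by (intro suminf_nonneg) auto
  have lu: "inLinf lam 1 T u" using Linf_lemma(1)[OF meas Hsqb X0] .
  have hd: "has_H_deriv lam T u u'"
  proof (rule hderiv_lemma[OF lp T _ qb db s2P])
    fix k t show "((\<lambda>s. u s k) has_vector_derivative u' t k) (at t within {0..T})"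
      unfolding u_def u'_def by (rule d_fsol)
  qed
  have we: "wave_eq lam T u u'" unfolding wave_eq_def
  proof (intro allI impI)
    fix s t k assume st: "0 \<le> s" "s \<le> t" "t \<le> T"
    have "((\<lambda>r. - complex_of_real (lam k) * u r k) has_integral (u' t k - u' s k)) {s..t}"
    proof (rule fundamental_theorem_of_calculus[OF st(2)])
      fix x assume "x \<in> {s..t}"
      show "((\<lambda>r. u' r k) has_vector_derivative - complex_of_real (lam k) * u x k) (at x within {s..t})"
        using d_dsol[of "a k" "\<beta> k" "\<mu> k" x "{s..t}"] unfolding u_def u'_def \<mu>2 by simp
    qed
    then show "u' t k - u' s k = integral {s..t} (\<lambda>r. - complex_of_real (lam k) * u r k)"
      by (rule integral_unique[symmetric])
  qed
  have u0: "u 0 = a" by (simp add: u_def fsol_def fun_eq_iff)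
  have ig: "integral {0..T} (\<lambda>t. exp (\<i> * complex_of_real (\<omega> * t)) * u t k) = g k" for k
  proof -
    have "integral {0..T} (\<lambda>t. exp (\<i> * complex_of_real (\<omega> * t)) * u t k) = a k * Cf T \<omega> (\<mu> k) + \<beta> k * Sf T \<omega> (\<mu> k)"
      unfolding u_def by (rule int_fsol)
    also have "\<dots> = g k" using Snz[of k] by (simp add: \<beta>_def \<mu>_def)
    finally show ?thesis .
  qed
  have sol: "is_solution lam T \<omega> a g u u'"
    unfolding is_solution_def inW1inf_def using cu lu hd cu' we u0 ig by blast
  have rep: "\<forall>t\<in>{0..T}. v t = u t \<and> v' t = u' t" if sv: "is_solution lam T \<omega> a g v v'" for v v'
  proof
    fix t assume t: "t \<in> {0..T}"
    have "v t k = u t k \<and> v' t k = u' t k" for k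
    proof -
      have B: "v' 0 k / of_real (sqrt (lam k)) = \<beta> k"
        using sol_repr(2)[OF lp T sv, of k] Snz[of k] unfolding \<beta>_def \<mu>_def
        by (simp add: eq_divide_eq)
      show ?thesis using sol_repr(1)[OF lp T sv, of k] t unfolding B u_def u'_def \<mu>_def by simp
    qed
    then show "v t = u t \<and> v' t = u' t" by (simp add: fun_eq_iff)
  qed
  have sqP: "sqrt (\<Sum>k. 2 * P k) \<le> sqrt (2 * K3) * (Hnorm lam 1 a + Hnorm lam 2 g)"
  proof -
    have AG: "Hnorm lam 1 a + Hnorm lam 2 g \<ge> 0" by (simp add: Hnorm_def)
    have "(\<Sum>k. 2 * P k) \<le> 2 * K3 * (Hnorm lam 1 a + Hnorm lam 2 g)\<^sup>2"
      using sumP unfolding suminf_mult[OF sP] by simp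
    then have "sqrt (\<Sum>k. 2 * P k) \<le> sqrt (2 * K3 * (Hnorm lam 1 a + Hnorm lam 2 g)\<^sup>2)"
      by (rule real_sqrt_le_mono)
    also have "\<dots> = sqrt (2 * K3) * (Hnorm lam 1 a + Hnorm lam 2 g)"
      using AG by (simp add: real_sqrt_mult)
    finally show ?thesis .
  qed
  have sqQ: "sqrt (\<Sum>k. 2 * Q k) \<le> sqrt (2 * K3 / l) * (Hnorm lam 1 a + Hnorm lam 2 g)"
  proof -
    have AG: "Hnorm lam 1 a + Hnorm lam 2 g \<ge> 0" by (simp add: Hnorm_def)
    have "(\<Sum>k. 2 * Q k) \<le> 2 * ((\<Sum>k. P k) / l)"
      using sumQ unfolding suminf_mult[OF sQ] by simp
    also have "\<dots> \<le> 2 * (K3 * (Hnorm lam 1 a + Hnorm lam 2 g)\<^sup>2 / l)"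
      using sumP l0 by (simp add: divide_right_mono)
    also have "\<dots> = 2 * K3 / l * (Hnorm lam 1 a + Hnorm lam 2 g)\<^sup>2" by simp
    finally have "sqrt (\<Sum>k. 2 * Q k) \<le> sqrt (2 * K3 / l * (Hnorm lam 1 a + Hnorm lam 2 g)\<^sup>2)"
      by (rule real_sqrt_le_mono)
    also have "\<dots> = sqrt (2 * K3 / l) * sqrt ((Hnorm lam 1 a + Hnorm lam 2 g)\<^sup>2)"
      by (rule real_sqrt_mult)
    also have "\<dots> = sqrt (2 * K3 / l) * (Hnorm lam 1 a + Hnorm lam 2 g)"
      using AG by simp
    finally show ?thesis .
  qed
  have nrm: "W1inf_norm lam T v v' \<le> (sqrt (2 * K3 / l) + 2 * sqrt (2 * K3)) * (Hnorm lam 1 a + Hnorm lam 2 g)"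
    if sv: "is_solution lam T \<omega> a g v v'" for v v'
  proof -
    have r: "\<And>t. t \<in> {0..T} \<Longrightarrow> v t = u t" "\<And>t. t \<in> {0..T} \<Longrightarrow> v' t = u' t"
      using rep[OF sv] by auto
    have c1: "Cnorm lam 0 T v \<le> sqrt (\<Sum>k. 2 * Q k)"
      using T Hu r(1) by (intro Cnorm_le) auto
    have c3: "Cnorm lam 0 T v' \<le> sqrt (\<Sum>k. 2 * P k)"
      using T Hu' r(2) by (intro Cnorm_le) auto
    have measv: "(\<lambda>t. Hsq lam 1 (v t)) \<in> borel_measurable (restrict_space lborel {0..T})"
      using meas by (subst measurable_cong[where g="\<lambda>t. Hsq lam 1 (u t)"]) (auto simp: space_restrict_space r(1))
    have c2: "Linf_norm lam 1 T v \<le> sqrt (\<Sum>k. 2 * P k)"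
      using Linf_lemma(2)[OF measv _ X0] Hsqb r(1) by simp
    have "W1inf_norm lam T v v' \<le> sqrt (\<Sum>k. 2 * Q k) + sqrt (\<Sum>k. 2 * P k) + sqrt (\<Sum>k. 2 * P k)"
      unfolding W1inf_norm_def using c1 c2 c3 by linarith
    also have "\<dots> \<le> sqrt (2 * K3 / l) * (Hnorm lam 1 a + Hnorm lam 2 g) + 2 * (sqrt (2 * K3) * (Hnorm lam 1 a + Hnorm lam 2 g))"
      using sqP sqQ by linarith
    finally show ?thesis by (simp add: algebra_simps)
  qed
  show ?thesis
  proof (intro conjI allI impI)
    show "\<exists>u u'. is_solution lam T \<omega> a g u u'" using sol by blast
  next
    fix u1 u1' u2 u2' assume "is_solution lam T \<omega> a g u1 u1'" "is_solution lam T \<omega> a g u2 u2'"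
    then show "\<forall>t\<in>{0..T}. u1 t = u2 t" using rep by fastforce
  next
    fix v v' assume "is_solution lam T \<omega> a g v v'"
    then show "W1inf_norm lam T v v' \<le> (sqrt (2 * K3 / l) + 2 * sqrt (2 * K3)) * (Hnorm lam 1 a + Hnorm lam 2 g)"
      by (rule nrm)
  qed
qed

theorem theorem1:
  fixes lam :: "nat \<Rightarrow> real" and T \<omega> :: real
  assumes "\<forall>k. lam k > 0"
    and "filterlim lam at_top sequentially"
    and "T > 0" and "\<omega> \<noteq> 0"
    and "exp (2 * \<i> * complex_of_real (\<omega> * T)) \<noteq> 1"
  shows "\<exists>c>0. \<forall>a g. inH lam 1 a \<longrightarrow> inH lam 2 g \<longrightarrow>
           (\<exists>u u'. is_solution lam T \<omega> a g u u') \<and>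
           (\<forall>u1 u1' u2 u2'. is_solution lam T \<omega> a g u1 u1' \<longrightarrow> is_solution lam T \<omega> a g u2 u2'
               \<longrightarrow> (\<forall>t\<in>{0..T}. u1 t = u2 t)) \<and>
           (\<forall>u u'. is_solution lam T \<omega> a g u u' \<longrightarrow>
               W1inf_norm lam T u u' \<le> c * (Hnorm lam 1 a + Hnorm lam 2 g))"
proof -
  have q: "sin (\<omega> * T) \<noteq> 0" using sin_nz assms(5) by blast
  obtain K1 K2 l where l0: "l > 0" and K1: "K1 \<ge> 0" and K2: "K2 \<ge> 0" and ll: "\<forall>k. l \<le> lam k"
    and b: "\<forall>k. Sf T \<omega> (sqrt (lam k)) \<noteq> 0 \<and>
        1 / (sqrt (lam k) * cmod (Sf T \<omega> (sqrt (lam k)))) \<le> K1 \<and>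
        cmod (Cf T \<omega> (sqrt (lam k)) / Sf T \<omega> (sqrt (lam k))) \<le> K2"
    using const_bounds[OF assms(1,2,3,4) q] by blast
  define K3 where "K3 = 1 + 2 * K1\<^sup>2 + 2 * K2\<^sup>2"
  define c where "c = sqrt (2 * K3 / l) + 2 * sqrt (2 * K3)"
  have "K3 > 0" unfolding K3_def by (simp add: add_pos_nonneg)
  then have c0: "c > 0" unfolding c_def using l0 by (simp add: add_nonneg_pos)
  show ?thesis
  proof (rule exI[of _ c], intro conjI[OF c0] allI impI)
    fix a g assume ha: "inH lam 1 a" and hg: "inH lam 2 g"
    note M = main_ag[OF assms(1,3) _ _ _ l0 _ ha hg, of \<omega> K1 K2]
    show "(\<exists>u u'. is_solution lam T \<omega> a g u u') \<and>
           (\<forall>u1 u1' u2 u2'. is_solution lam T \<omega> a g u1 u1' \<longrightarrow> is_solution lam T \<omega> a g u2 u2'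
               \<longrightarrow> (\<forall>t\<in>{0..T}. u1 t = u2 t)) \<and>
           (\<forall>u u'. is_solution lam T \<omega> a g u u' \<longrightarrow>
               W1inf_norm lam T u u' \<le> c * (Hnorm lam 1 a + Hnorm lam 2 g))"
      using M b ll unfolding c_def K3_def by blast
  qed
qed

end
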